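(* Let $\Gamma=(V,E)$ be a simple graph of order $n$ and size $m$. Then the global dual alliance number of $\Gamma$ satisfies $$\gamma_{a_d}(\Gamma)\ge \left\lceil\frac{\sqrt{2m+n}}{2}\right\rceil$$ and the global strong dual alliance number of $\Gamma$ satisfies $$\gamma_{\hat{a}_d}(\Gamma)\ge \left\lceil\frac{1+\sqrt{1+8(n+m)}}{4}\right\rceil.$$
   Context: For $S\subseteq V$ and $v\in V$, $N_S(v)=\{u\in S: u\sim v\}$ and $N_{V\setminus S}(v)=\{u\in V\setminus S: u\sim v\}$. A nonempty set $S\subseteq V$ is a global dual alliance if (i) $|N_S(v)|+1\ge |N_{V\setminus S}(v)|$ for every $v\in S$ and (ii) $|N_S(v)|\ge |N_{V\setminus S}(v)|+1$ for every $v\in V\setminus S$. It is a global strong dual alliance if (i') $|N_S(v)|\ge |N_{V\setminus S}(v)|$ for every $v\in S$ and (ii') $|N_S(v)|\ge |N_{V\setminus S}(v)|+2$ for every $v\in V\setminus S$. $\gamma_{a_d}(\Gamma)$ (resp. $\gamma_{\hat a_d}(\Gamma)$) is the minimum cardinality of a global dual (resp. global strong dual) alliance. *)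

theory Defs
  imports Complex_Main
begin

definition simple_graph :: "'a set \<Rightarrow> ('a \<Rightarrow> 'a \<Rightarrow> bool) \<Rightarrow> bool" where
  "simple_graph V E \<longleftrightarrow> finite V \<and> (\<forall>u v. E u v \<longrightarrow> u \<in> V \<and> v \<in> V)
     \<and> (\<forall>u v. E u v \<longrightarrow> E v u) \<and> (\<forall>v. \<not> E v v)"

definition edges :: "'a set \<Rightarrow> ('a \<Rightarrow> 'a \<Rightarrow> bool) \<Rightarrow> 'a set set" where
  "edges V E = {{u, v} | u v. u \<in> V \<and> v \<in> V \<and> E u v}"

definition nbhd :: "'a set \<Rightarrow> ('a \<Rightarrow> 'a \<Rightarrow> bool) \<Rightarrow> 'a \<Rightarrow> 'a set" where
  "nbhd S E v = {u \<in> S. E u v}"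

definition global_dual_alliance :: "'a set \<Rightarrow> ('a \<Rightarrow> 'a \<Rightarrow> bool) \<Rightarrow> 'a set \<Rightarrow> bool" where
  "global_dual_alliance V E S \<longleftrightarrow> S \<noteq> {} \<and> S \<subseteq> V
     \<and> (\<forall>v\<in>S. card (nbhd S E v) + 1 \<ge> card (nbhd (V - S) E v))
     \<and> (\<forall>v\<in>V - S. card (nbhd S E v) \<ge> card (nbhd (V - S) E v) + 1)"

definition global_strong_dual_alliance :: "'a set \<Rightarrow> ('a \<Rightarrow> 'a \<Rightarrow> bool) \<Rightarrow> 'a set \<Rightarrow> bool" where
  "global_strong_dual_alliance V E S \<longleftrightarrow> S \<noteq> {} \<and> S \<subseteq> V
     \<and> (\<forall>v\<in>S. card (nbhd S E v) \<ge> card (nbhd (V - S) E v))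
     \<and> (\<forall>v\<in>V - S. card (nbhd S E v) \<ge> card (nbhd (V - S) E v) + 2)"

definition global_dual_alliance_number :: "'a set \<Rightarrow> ('a \<Rightarrow> 'a \<Rightarrow> bool) \<Rightarrow> nat" where
  "global_dual_alliance_number V E = Min (card ` {S. global_dual_alliance V E S})"

definition global_strong_dual_alliance_number :: "'a set \<Rightarrow> ('a \<Rightarrow> 'a \<Rightarrow> bool) \<Rightarrow> nat" where
  "global_strong_dual_alliance_number V E = Min (card ` {S. global_strong_dual_alliance V E S})"

end

theory Submission
  imports Defs
begin

lemma handshake:
  assumes g: "simple_graph V E"
  shows "2 * card (edges V E) = (\<Sum>v\<in>V. card (nbhd V E v))"
proof -
  have fin: "finite V" using g by (simp add: simple_graph_def)
  define D where "D = {(u,v). u \<in> V \<and> v \<in> V \<and> E u v}"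
  define A where "A e = {(u,v). u \<in> V \<and> v \<in> V \<and> E u v \<and> {u,v} = e}" for e
  have finD: "finite D" unfolding D_def
    by (rule finite_subset[of _ "V \<times> V"]) (use fin in auto)
  have finE: "finite (edges V E)"
  proof -
    have "edges V E \<subseteq> (\<lambda>(u,v). {u,v}) ` D" unfolding edges_def D_def by auto
    thus ?thesis using finD finite_surj by blast
  qed
  have U: "D = (\<Union>e\<in>edges V E. A e)" unfolding D_def A_def edges_def by auto
  have c2: "card (A e) = 2" if eE: "e \<in> edges V E" for e
  proof -
    obtain a b where ab: "a \<in> V" "b \<in> V" "E a b" "e = {a,b}" using eE unfolding edges_def by blast
    have "a \<noteq> b" using ab g by (auto simp: simple_graph_def)
    have "A e = {(a,b),(b,a)}" unfolding A_def using ab g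
      by (auto simp: simple_graph_def doubleton_eq_iff)
    thus ?thesis using \<open>a \<noteq> b\<close> by auto
  qed
  have "card D = (\<Sum>e\<in>edges V E. card (A e))"
    unfolding U
    apply (rule card_UN_disjoint[OF finE])
    subgoal using finD U by (metis UN_upper finite_subset)
    subgoal unfolding A_def by auto
    done
  also have "\<dots> = 2 * card (edges V E)" using c2 by simp
  finally have 1: "card D = 2 * card (edges V E)" .
  have "D = (\<lambda>(v,u). (u,v)) ` (SIGMA v:V. nbhd V E v)"
    unfolding D_def nbhd_def by auto
  hence "card D = card (SIGMA v:V. nbhd V E v)"
    by (simp add: card_image inj_on_def)
  also have "\<dots> = (\<Sum>v\<in>V. card (nbhd V E v))"
    by (rule card_SigmaI) (use fin in \<open>auto simp: nbhd_def\<close>)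
  finally show ?thesis using 1 by simp
qed

lemma cross:
  assumes g: "simple_graph V E" and S: "S \<subseteq> V"
  shows "(\<Sum>v\<in>S. card (nbhd (V-S) E v)) = (\<Sum>v\<in>V-S. card (nbhd S E v))"
proof -
  have fin: "finite V" using g by (simp add: simple_graph_def)
  have finS: "finite S" using fin S finite_subset by blast
  have "(\<Sum>v\<in>S. card (nbhd (V-S) E v)) = card (SIGMA v:S. nbhd (V-S) E v)"
    by (rule card_SigmaI[symmetric]) (use fin finS in \<open>auto simp: nbhd_def\<close>)
  also have "(SIGMA v:S. nbhd (V-S) E v) = (\<lambda>(v,u). (u,v)) ` (SIGMA v:V-S. nbhd S E v)"
    using g unfolding nbhd_def simple_graph_def by auto
  also have "card \<dots> = card (SIGMA v:V-S. nbhd S E v)"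
    by (simp add: card_image inj_on_def)
  also have "\<dots> = (\<Sum>v\<in>V-S. card (nbhd S E v))"
    by (rule card_SigmaI) (use fin finS in \<open>auto simp: nbhd_def\<close>)
  finally show ?thesis .
qed

lemma split4:
  assumes g: "simple_graph V E" and S: "S \<subseteq> V"
  shows "2 * card (edges V E) = (\<Sum>v\<in>S. card (nbhd S E v)) + 2 * (\<Sum>v\<in>S. card (nbhd (V-S) E v))
     + (\<Sum>v\<in>V-S. card (nbhd (V-S) E v))"
proof -
  have fin: "finite V" using g by (simp add: simple_graph_def)
  have finS: "finite S" using fin S finite_subset by blast
  have nb: "card (nbhd V E v) = card (nbhd S E v) + card (nbhd (V-S) E v)" for v
  proof -
    have "nbhd V E v = nbhd S E v \<union> nbhd (V-S) E v" using S unfolding nbhd_def by auto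
    moreover have "finite (nbhd S E v)" "finite (nbhd (V-S) E v)"
      using fin finS unfolding nbhd_def by auto
    moreover have "nbhd S E v \<inter> nbhd (V-S) E v = {}" unfolding nbhd_def by auto
    ultimately show ?thesis by (simp add: card_Un_disjoint)
  qed
  have "(\<Sum>v\<in>V. card (nbhd V E v)) = (\<Sum>v\<in>S. card (nbhd V E v)) + (\<Sum>v\<in>V-S. card (nbhd V E v))"
    using S fin by (metis Diff_partition sum.subset_diff add.commute)
  also have "\<dots> = (\<Sum>v\<in>S. card (nbhd S E v)) + (\<Sum>v\<in>S. card (nbhd (V-S) E v))
     + ((\<Sum>v\<in>V-S. card (nbhd S E v)) + (\<Sum>v\<in>V-S. card (nbhd (V-S) E v)))"
    by (simp add: nb sum.distrib)
  finally show ?thesis using handshake[OF g] cross[OF g S] by simp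
qed

lemma nbS_le:
  assumes g: "simple_graph V E" and S: "S \<subseteq> V" and v: "v \<in> S"
  shows "card (nbhd S E v) \<le> card S - 1"
proof -
  have fin: "finite S" using g S finite_subset by (auto simp: simple_graph_def)
  have "nbhd S E v \<subseteq> S - {v}" using g unfolding nbhd_def simple_graph_def by auto
  hence "card (nbhd S E v) \<le> card (S - {v})" using fin by (intro card_mono) auto
  thus ?thesis using v fin by simp
qed

lemma dual_bound:
  assumes g: "simple_graph V E" and A: "global_dual_alliance V E S"
  shows "2 * card (edges V E) + card V \<le> 4 * card S ^ 2"
proof -
  have S: "S \<subseteq> V" "S \<noteq> {}" using A by (auto simp: global_dual_alliance_def)
  have fin: "finite V" using g by (simp add: simple_graph_def)
  have finS: "finite S" using fin S finite_subset by blast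
  let ?s = "card S"
  define a where "a = (\<Sum>v\<in>S. card (nbhd S E v))"
  define b where "b = (\<Sum>v\<in>S. card (nbhd (V-S) E v))"
  define c where "c = (\<Sum>v\<in>V-S. card (nbhd S E v))"
  define d where "d = (\<Sum>v\<in>V-S. card (nbhd (V-S) E v))"
  have a: "a \<le> ?s * (?s - 1)" unfolding a_def
    using sum_bounded_above[of S "\<lambda>v. card (nbhd S E v)" "?s - 1"] nbS_le[OF g S(1)] by auto
  have "b \<le> (\<Sum>v\<in>S. card (nbhd S E v) + 1)" unfolding b_def
    using A by (intro sum_mono) (auto simp: global_dual_alliance_def)
  moreover have "(\<Sum>v\<in>S. card (nbhd S E v) + 1) = a + ?s" by (subst sum.distrib) (simp add: a_def)
  ultimately have b: "b \<le> a + ?s" by simp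
  have "(\<Sum>v\<in>V-S. card (nbhd (V-S) E v) + 1) \<le> c" unfolding c_def
    using A by (intro sum_mono) (auto simp: global_dual_alliance_def)
  moreover have "(\<Sum>v\<in>V-S. card (nbhd (V-S) E v) + 1) = d + card (V - S)" by (subst sum.distrib) (simp add: d_def)
  ultimately have cd: "d + card (V - S) \<le> c" by simp
  have cs: "card (V - S) = card V - ?s" using S fin by (simp add: card_Diff_subset finite_subset)
  have sV: "?s \<le> card V" using S fin card_mono by blast
  have bc: "b = c" using cross[OF g S(1)] by (simp add: b_def c_def)
  have e: "2 * card (edges V E) = a + 2 * b + d" using split4[OF g S(1)] by (simp add: a_def b_def d_def)
  have "?s * (?s - 1) \<le> ?s * ?s" by simp
  have "2 * card (edges V E) + card V \<le> 4 * a + 4 * ?s"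
    using e b cd bc cs sV by linarith
  also have "\<dots> \<le> 4 * (?s * ?s)"
  proof -
    have "a + ?s \<le> ?s * (?s - 1) + ?s" using a by simp
    also have "\<dots> = ?s * ?s" using S finS by (cases ?s) auto
    finally show ?thesis by linarith
  qed
  also have "\<dots> \<le> 4 * ?s ^ 2" by (simp add: power2_eq_square)
  finally show ?thesis .
qed

lemma strong_bound:
  assumes g: "simple_graph V E" and A: "global_strong_dual_alliance V E S"
  shows "card (edges V E) + card V + card S \<le> 2 * card S ^ 2"
proof -
  have S: "S \<subseteq> V" "S \<noteq> {}" using A by (auto simp: global_strong_dual_alliance_def)
  have fin: "finite V" using g by (simp add: simple_graph_def)
  have finS: "finite S" using fin S finite_subset by blast
  let ?s = "card S"
  define a where "a = (\<Sum>v\<in>S. card (nbhd S E v))"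
  define b where "b = (\<Sum>v\<in>S. card (nbhd (V-S) E v))"
  define c where "c = (\<Sum>v\<in>V-S. card (nbhd S E v))"
  define d where "d = (\<Sum>v\<in>V-S. card (nbhd (V-S) E v))"
  have a: "a \<le> ?s * (?s - 1)" unfolding a_def
    using sum_bounded_above[of S "\<lambda>v. card (nbhd S E v)" "?s - 1"] nbS_le[OF g S(1)] by auto
  have "b \<le> a" unfolding b_def a_def
    using A by (intro sum_mono) (auto simp: global_strong_dual_alliance_def)
  hence b: "b \<le> a" .
  have "(\<Sum>v\<in>V-S. card (nbhd (V-S) E v) + 2) \<le> c" unfolding c_def
    using A by (intro sum_mono) (auto simp: global_strong_dual_alliance_def)
  moreover have "(\<Sum>v\<in>V-S. card (nbhd (V-S) E v) + 2) = d + 2 * card (V - S)" by (subst sum.distrib) (simp add: d_def)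
  ultimately have cd: "d + 2 * card (V - S) \<le> c" by simp
  have cs: "card (V - S) = card V - ?s" using S fin by (simp add: card_Diff_subset finite_subset)
  have sV: "?s \<le> card V" using S fin card_mono by blast
  have bc: "b = c" using cross[OF g S(1)] by (simp add: b_def c_def)
  have e: "2 * card (edges V E) = a + 2 * b + d" using split4[OF g S(1)] by (simp add: a_def b_def d_def)
  have ss: "?s * (?s - 1) + ?s = ?s * ?s" using S finS by (cases ?s) auto
  have "2 * card (edges V E) + 2 * card V \<le> 4 * a + 2 * ?s"
    using e b cd bc cs sV by linarith
  moreover have "4 * a + 4 * ?s \<le> 4 * (?s * ?s)" using a ss by linarith
  ultimately have "2 * card (edges V E) + 2 * card V + 2 * ?s \<le> 4 * (?s * ?s)" by linarith
  thus ?thesis by (simp add: power2_eq_square)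
qed

theorem theorem9:
  fixes V :: "'a set" and E :: "'a \<Rightarrow> 'a \<Rightarrow> bool" and n m :: nat
  assumes "simple_graph V E" and "V \<noteq> {}"
    and "n = card V" and "m = card (edges V E)"
  shows "int (global_dual_alliance_number V E) \<ge> \<lceil>sqrt (2 * real m + real n) / 2\<rceil>
    \<and> int (global_strong_dual_alliance_number V E)
           \<ge> \<lceil>(1 + sqrt (1 + 8 * (real n + real m))) / 4\<rceil>"
proof
  have fin: "finite V" using assms(1) by (simp add: simple_graph_def)
  have f1: "finite (card ` {S. global_dual_alliance V E S})"
    by (rule finite_imageI, rule finite_subset[of _ "Pow V"]) (use fin in \<open>auto simp: global_dual_alliance_def\<close>)
  have n1: "{S. global_dual_alliance V E S} \<noteq> {}"
  proof -
    have "nbhd (V - V) E v = {}" for v by (simp add: nbhd_def)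
    hence "global_dual_alliance V E V" using assms(2) by (simp add: global_dual_alliance_def)
    thus ?thesis by blast
  qed
  obtain S where S: "global_dual_alliance V E S" "global_dual_alliance_number V E = card S"
    using Min_in[OF f1] n1 unfolding global_dual_alliance_number_def by auto
  have "2 * m + n \<le> 4 * card S ^ 2" using dual_bound[OF assms(1) S(1)] assms by simp
  hence "real (2 * m + n) \<le> real (4 * card S ^ 2)" by (simp only: of_nat_le_iff)
  hence "2 * real m + real n \<le> (2 * real (card S))^2" by (simp add: power_mult_distrib)
  hence "sqrt (2 * real m + real n) \<le> sqrt ((2 * real (card S))^2)" by (rule real_sqrt_le_mono)
  also have "\<dots> = 2 * real (card S)" by (subst real_sqrt_abs) simp
  finally have "sqrt (2 * real m + real n) / 2 \<le> real (card S)" by simp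
  thus "int (global_dual_alliance_number V E) \<ge> \<lceil>sqrt (2 * real m + real n) / 2\<rceil>"
    using S(2) by (simp add: ceiling_le_iff)
next
  have fin: "finite V" using assms(1) by (simp add: simple_graph_def)
  have f1: "finite (card ` {S. global_strong_dual_alliance V E S})"
    by (rule finite_imageI, rule finite_subset[of _ "Pow V"]) (use fin in \<open>auto simp: global_strong_dual_alliance_def\<close>)
  have n1: "{S. global_strong_dual_alliance V E S} \<noteq> {}"
  proof -
    have "nbhd (V - V) E v = {}" for v by (simp add: nbhd_def)
    hence "global_strong_dual_alliance V E V" using assms(2) by (simp add: global_strong_dual_alliance_def)
    thus ?thesis by blast
  qed
  obtain S where S: "global_strong_dual_alliance V E S" "global_strong_dual_alliance_number V E = card S"
    using Min_in[OF f1] n1 unfolding global_strong_dual_alliance_number_def by auto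
  have S0: "card S \<ge> 1" using S(1) fin
    by (auto simp: global_strong_dual_alliance_def finite_subset Suc_le_eq card_gt_0_iff)
  have "m + n + card S \<le> 2 * card S ^ 2" using strong_bound[OF assms(1) S(1)] assms by simp
  hence "real (m + n + card S) \<le> real (2 * card S ^ 2)" by (simp only: of_nat_le_iff)
  hence h: "real m + real n + real (card S) \<le> 2 * real (card S)^2" by simp
  have "1 + 8 * (real n + real m) \<le> (4 * real (card S) - 1)^2"
    using h by (simp add: power2_eq_square algebra_simps)
  hence "sqrt (1 + 8 * (real n + real m)) \<le> sqrt ((4 * real (card S) - 1)^2)" by (rule real_sqrt_le_mono)
  also have "\<dots> = 4 * real (card S) - 1" using S0 by (subst real_sqrt_abs) simp
  finally have "(1 + sqrt (1 + 8 * (real n + real m))) / 4 \<le> real (card S)" by simp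
  thus "int (global_strong_dual_alliance_number V E) \<ge> \<lceil>(1 + sqrt (1 + 8 * (real n + real m))) / 4\<rceil>"
    using S(2) by (simp add: ceiling_le_iff)
qed

end
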